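(* Let $\Lambda$ be a finitely aligned left cancellative small category. Then the set \[F_\Lambda=\Big\{\bigcup_{i=1}^n\alpha_i\beta_i^*\in S_\Lambda^{\mathrm{Iso}}:\ n\ge1,\ \alpha_i,\beta_i\in\Lambda,\ \{\alpha_i\}_{i=1}^n\text{ and }\{\beta_i\}_{i=1}^n\text{ are exhaustive}\Big\}\cup\{0\}\] is an inverse subsemigroup of $S_\Lambda^{\mathrm{Iso}}$.
   Context: $\Lambda$ is a small category (objects $\Lambda^0$, range $r$, source $s$) which is left cancellative and finitely aligned (each $\alpha\Lambda\cap\beta\Lambda$ is a finite union of sets $f\Lambda$, where $\alpha\Lambda=\{\alpha\beta:s(\alpha)=r(\beta)\}$). Each $\alpha\in\Lambda$ is the partial bijection $s(\alpha)\Lambda\to\alpha\Lambda$, $\beta\mapsto\alpha\beta$, in the symmetric inverse monoid $\mathcal{I}(\Lambda)$ (composition on largest domain, zero = empty map), with inverse $\alpha^*$; $S_\Lambda$ is the inverse subsemigroup generated by these, and $\bigcup$ denotes union of partial maps. $S_\Lambda^{\mathrm{Iso}}=\{s\in S_\Lambda:ses^*e\neq0\text{ for every idempotent }0\neq e\leqslant s^*s\}$ (with $e\leqslant f$ iff $ef=e$); it is an inverse subsemigroup. For $x\in\Lambda^0$, a set $B\subseteq x\Lambda$ is exhaustive (at $x$) if for every $\alpha\in x\Lambda$ there is $\beta\in B$ with $\alpha\Lambda\cap\beta\Lambda\neq\emptyset$; "exhaustive" means exhaustive at some $x\in\Lambda^0$. *)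

theory Defs
  imports Main
begin

text \<open>A small category is given by its set of morphisms L, its set of objects Obj
  (identified with the identity morphisms), range r, source s and composition cmp
  (cmp a b = a b, defined when s a = r b).  Partial bijections of L are represented
  as relations (graphs); the product st of the symmetric inverse monoid (first t, then s)
  is t O s, the inverse is the converse relation and the zero is the empty relation.\<close>

definition small_category ::
  "'a set \<Rightarrow> 'a set \<Rightarrow> ('a \<Rightarrow> 'a) \<Rightarrow> ('a \<Rightarrow> 'a) \<Rightarrow> ('a \<Rightarrow> 'a \<Rightarrow> 'a) \<Rightarrow> bool" where
  "small_category L Obj r s cmp \<longleftrightarrow>
     Obj \<subseteq> L \<and>
     (\<forall>a\<in>L. r a \<in> Obj \<and> s a \<in> Obj) \<and>
     (\<forall>x\<in>Obj. r x = x \<and> s x = x) \<and>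
     (\<forall>a\<in>L. \<forall>b\<in>L. s a = r b \<longrightarrow>
        cmp a b \<in> L \<and> r (cmp a b) = r a \<and> s (cmp a b) = s b) \<and>
     (\<forall>a\<in>L. cmp (r a) a = a \<and> cmp a (s a) = a) \<and>
     (\<forall>a\<in>L. \<forall>b\<in>L. \<forall>c\<in>L. s a = r b \<longrightarrow> s b = r c \<longrightarrow>
        cmp (cmp a b) c = cmp a (cmp b c))"

definition left_cancellative ::
  "'a set \<Rightarrow> ('a \<Rightarrow> 'a) \<Rightarrow> ('a \<Rightarrow> 'a) \<Rightarrow> ('a \<Rightarrow> 'a \<Rightarrow> 'a) \<Rightarrow> bool" where
  "left_cancellative L r s cmp \<longleftrightarrow>
     (\<forall>a\<in>L. \<forall>b\<in>L. \<forall>c\<in>L. s a = r b \<longrightarrow> s a = r c \<longrightarrow> cmp a b = cmp a c \<longrightarrow> b = c)"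

definition right_ideal ::
  "'a set \<Rightarrow> ('a \<Rightarrow> 'a) \<Rightarrow> ('a \<Rightarrow> 'a) \<Rightarrow> ('a \<Rightarrow> 'a \<Rightarrow> 'a) \<Rightarrow> 'a \<Rightarrow> 'a set" where
  "right_ideal L r s cmp a = {cmp a b | b. b \<in> L \<and> s a = r b}"

definition finitely_aligned ::
  "'a set \<Rightarrow> ('a \<Rightarrow> 'a) \<Rightarrow> ('a \<Rightarrow> 'a) \<Rightarrow> ('a \<Rightarrow> 'a \<Rightarrow> 'a) \<Rightarrow> bool" where
  "finitely_aligned L r s cmp \<longleftrightarrow>
     (\<forall>a\<in>L. \<forall>b\<in>L. \<exists>G. finite G \<and> G \<subseteq> L \<and>
        right_ideal L r s cmp a \<inter> right_ideal L r s cmp b = (\<Union>f\<in>G. right_ideal L r s cmp f))"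

definition mor ::
  "'a set \<Rightarrow> ('a \<Rightarrow> 'a) \<Rightarrow> ('a \<Rightarrow> 'a) \<Rightarrow> ('a \<Rightarrow> 'a \<Rightarrow> 'a) \<Rightarrow> 'a \<Rightarrow> 'a rel" where
  "mor L r s cmp a = {(b, cmp a b) | b. b \<in> L \<and> r b = s a}"

definition pmult :: "'a rel \<Rightarrow> 'a rel \<Rightarrow> 'a rel" where
  "pmult f g = g O f"

inductive_set S_Lambda ::
  "'a set \<Rightarrow> ('a \<Rightarrow> 'a) \<Rightarrow> ('a \<Rightarrow> 'a) \<Rightarrow> ('a \<Rightarrow> 'a \<Rightarrow> 'a) \<Rightarrow> 'a rel set"
  for L r s cmp where
  gen: "a \<in> L \<Longrightarrow> mor L r s cmp a \<in> S_Lambda L r s cmp"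
| zero: "{} \<in> S_Lambda L r s cmp"
| inv: "f \<in> S_Lambda L r s cmp \<Longrightarrow> converse f \<in> S_Lambda L r s cmp"
| mult: "f \<in> S_Lambda L r s cmp \<Longrightarrow> g \<in> S_Lambda L r s cmp \<Longrightarrow> pmult f g \<in> S_Lambda L r s cmp"

definition S_Iso ::
  "'a set \<Rightarrow> ('a \<Rightarrow> 'a) \<Rightarrow> ('a \<Rightarrow> 'a) \<Rightarrow> ('a \<Rightarrow> 'a \<Rightarrow> 'a) \<Rightarrow> 'a rel set" where
  "S_Iso L r s cmp = {u \<in> S_Lambda L r s cmp.
     \<forall>e \<in> S_Lambda L r s cmp. pmult e e = e \<longrightarrow> e \<noteq> {} \<longrightarrow>
        pmult e (pmult (converse u) u) = e \<longrightarrow>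
        pmult (pmult (pmult u e) (converse u)) e \<noteq> {}}"

definition obj_slice :: "'a set \<Rightarrow> ('a \<Rightarrow> 'a) \<Rightarrow> 'a \<Rightarrow> 'a set" where
  "obj_slice L r x = {a \<in> L. r a = x}"

definition exhaustive_at ::
  "'a set \<Rightarrow> ('a \<Rightarrow> 'a) \<Rightarrow> ('a \<Rightarrow> 'a) \<Rightarrow> ('a \<Rightarrow> 'a \<Rightarrow> 'a) \<Rightarrow> 'a \<Rightarrow> 'a set \<Rightarrow> bool" where
  "exhaustive_at L r s cmp x B \<longleftrightarrow> B \<subseteq> obj_slice L r x \<and>
     (\<forall>a \<in> obj_slice L r x. \<exists>b \<in> B.
        right_ideal L r s cmp a \<inter> right_ideal L r s cmp b \<noteq> {})"

definition exhaustive ::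
  "'a set \<Rightarrow> 'a set \<Rightarrow> ('a \<Rightarrow> 'a) \<Rightarrow> ('a \<Rightarrow> 'a) \<Rightarrow> ('a \<Rightarrow> 'a \<Rightarrow> 'a) \<Rightarrow> 'a set \<Rightarrow> bool" where
  "exhaustive L Obj r s cmp B \<longleftrightarrow> (\<exists>x\<in>Obj. exhaustive_at L r s cmp x B)"

definition F_Lambda ::
  "'a set \<Rightarrow> 'a set \<Rightarrow> ('a \<Rightarrow> 'a) \<Rightarrow> ('a \<Rightarrow> 'a) \<Rightarrow> ('a \<Rightarrow> 'a \<Rightarrow> 'a) \<Rightarrow> 'a rel set" where
  "F_Lambda L Obj r s cmp =
     {u. \<exists>(n::nat) (al::nat \<Rightarrow> 'a) (be::nat \<Rightarrow> 'a). n \<ge> 1 \<and>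
        (\<forall>i<n. al i \<in> L \<and> be i \<in> L) \<and>
        u = (\<Union>i<n. pmult (mor L r s cmp (al i)) (converse (mor L r s cmp (be i)))) \<and>
        u \<in> S_Iso L r s cmp \<and>
        exhaustive L Obj r s cmp (al ` {..<n}) \<and>
        exhaustive L Obj r s cmp (be ` {..<n})} \<union> {{}}"

definition inverse_subsemigroup :: "'a rel set \<Rightarrow> 'a rel set \<Rightarrow> bool" where
  "inverse_subsemigroup T U \<longleftrightarrow> T \<subseteq> U \<and>
     (\<forall>f\<in>T. \<forall>g\<in>T. pmult f g \<in> T) \<and> (\<forall>f\<in>T. converse f \<in> T)"

end

theory Submission imports Defs begin

locale lcat =
  fixes L Obj :: "'a set" and r s :: "'a \<Rightarrow> 'a" and cmp :: "'a \<Rightarrow> 'a \<Rightarrow> 'a"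
  assumes sc: "small_category L Obj r s cmp"
    and lc: "left_cancellative L r s cmp"
    and fa: "finitely_aligned L r s cmp"
begin

abbreviation "RI \<equiv> right_ideal L r s cmp"
abbreviation "M \<equiv> mor L r s cmp"
abbreviation "SL \<equiv> S_Lambda L r s cmp"
abbreviation "Iso \<equiv> S_Iso L r s cmp"
abbreviation "span a b \<equiv> pmult (M a) (converse (M b))"

lemma Obj_sub: "Obj \<subseteq> L" using sc unfolding small_category_def by blast
lemma r_Obj: "a \<in> L \<Longrightarrow> r a \<in> Obj" using sc unfolding small_category_def by blast
lemma s_Obj: "a \<in> L \<Longrightarrow> s a \<in> Obj" using sc unfolding small_category_def by blast
lemma obj_r: "x \<in> Obj \<Longrightarrow> r x = x" using sc unfolding small_category_def by blast
lemma obj_s: "x \<in> Obj \<Longrightarrow> s x = x" using sc unfolding small_category_def by blast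
lemma cmpL: "a \<in> L \<Longrightarrow> b \<in> L \<Longrightarrow> s a = r b \<Longrightarrow> cmp a b \<in> L" using sc unfolding small_category_def by blast
lemma r_cmp: "a \<in> L \<Longrightarrow> b \<in> L \<Longrightarrow> s a = r b \<Longrightarrow> r (cmp a b) = r a" using sc unfolding small_category_def by blast
lemma s_cmp: "a \<in> L \<Longrightarrow> b \<in> L \<Longrightarrow> s a = r b \<Longrightarrow> s (cmp a b) = s b" using sc unfolding small_category_def by blast
lemma idl: "a \<in> L \<Longrightarrow> cmp (r a) a = a" using sc unfolding small_category_def by blast
lemma idr: "a \<in> L \<Longrightarrow> cmp a (s a) = a" using sc unfolding small_category_def by blast
lemma assoc: "a \<in> L \<Longrightarrow> b \<in> L \<Longrightarrow> c \<in> L \<Longrightarrow> s a = r b \<Longrightarrow> s b = r c \<Longrightarrow>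
   cmp (cmp a b) c = cmp a (cmp b c)" using sc unfolding small_category_def by blast
lemma lcancel: "a \<in> L \<Longrightarrow> b \<in> L \<Longrightarrow> c \<in> L \<Longrightarrow> s a = r b \<Longrightarrow> s a = r c \<Longrightarrow> cmp a b = cmp a c \<Longrightarrow> b = c"
  using lc unfolding left_cancellative_def by blast
lemma falign: "a \<in> L \<Longrightarrow> b \<in> L \<Longrightarrow> \<exists>G. finite G \<and> G \<subseteq> L \<and> RI a \<inter> RI b = (\<Union>f\<in>G. RI f)"
  using fa unfolding finitely_aligned_def by blast
lemma RI_iff: "x \<in> RI a \<longleftrightarrow> (\<exists>b. b \<in> L \<and> s a = r b \<and> x = cmp a b)"
  unfolding right_ideal_def by blast

lemma span_eq: "span a b = {(cmp b z, cmp a z) | z. z \<in> L \<and> r z = s a \<and> r z = s b}"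
  unfolding pmult_def mor_def by auto

definition pinj :: "'a rel \<Rightarrow> bool" where
  "pinj R \<longleftrightarrow> single_valued R \<and> single_valued (converse R)"

lemma pinj_M: "a \<in> L \<Longrightarrow> pinj (M a)"
  unfolding pinj_def mor_def single_valued_def using lcancel by auto

lemma SL_pinj: "f \<in> SL \<Longrightarrow> pinj f"
proof (induction rule: S_Lambda.induct)
  case (gen a) then show ?case using pinj_M by blast
next
  case zero then show ?case by (simp add: pinj_def single_valued_def)
next
  case (inv f) then show ?case by (simp add: pinj_def)
next
  case (mult f g) then show ?case
    unfolding pinj_def pmult_def by (simp add: converse_relcomp single_valued_relcomp)
qed

lemma idem_Id_on: assumes "pinj e" "pmult e e = e" shows "e = Id_on (Domain e)"
proof -
  have ee: "e O e = e" using assms(2) by (simp add: pmult_def)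
  have sv: "single_valued e" "single_valued (converse e)" using assms(1) pinj_def by auto
  show ?thesis
  proof
    show "e \<subseteq> Id_on (Domain e)"
    proof
      fix p assume "p \<in> e"
      then obtain x y where p: "p = (x,y)" "(x,y) \<in> e" by (cases p) auto
      then have "(x,y) \<in> e O e" using ee by simp
      then obtain z where "(x,z) \<in> e" "(z,y) \<in> e" by blast
      then have "z = y" using p sv(1) unfolding single_valued_def by blast
      then have "(y,y) \<in> e" using \<open>(z,y) \<in> e\<close> by simp
      then have "x = y" using p sv(2) unfolding single_valued_def by blast
      then show "p \<in> Id_on (Domain e)" using p by auto
    qed
  next
    show "Id_on (Domain e) \<subseteq> e"
    proof
      fix p assume "p \<in> Id_on (Domain e)"
      then obtain x y where p: "p = (x,x)" "(x,y) \<in> e" by auto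
      then have "(x,y) \<in> e O e" using ee by simp
      then obtain z where "(x,z) \<in> e" "(z,y) \<in> e" by blast
      then have "z = y" using p sv(1) unfolding single_valued_def by blast
      then have "(y,y) \<in> e" using \<open>(z,y) \<in> e\<close> by simp
      then have "x = y" using p sv(2) unfolding single_valued_def by blast
      then show "p \<in> e" using p \<open>(y,y) \<in> e\<close> by simp
    qed
  qed
qed

lemma iso_iff: assumes "u \<in> SL"
  shows "u \<in> Iso \<longleftrightarrow> (\<forall>D. Id_on D \<in> SL \<longrightarrow> D \<noteq> {} \<longrightarrow> D \<subseteq> Domain u \<longrightarrow> (\<exists>x\<in>D. \<exists>y\<in>D. (x,y) \<in> u))"
proof -
  have sv: "single_valued u" "single_valued (converse u)" using SL_pinj[OF assms] pinj_def by auto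
  have c0: "pmult (Id_on D) (pmult (converse u) u) = Id_on (D \<inter> Domain u)" for D
  proof (rule set_eqI)
    fix pr :: "'a \<times> 'a"
    obtain a c where pr: "pr = (a,c)" by (cases pr)
    have "(a,c) \<in> (u O converse u) O Id_on D \<longleftrightarrow> (a,c) \<in> Id_on (D \<inter> Domain u)"
    proof
      assume "(a,c) \<in> (u O converse u) O Id_on D"
      then obtain b where "(a,b) \<in> u" "(c,b) \<in> u" "c \<in> D" by blast
      moreover then have "a = c" using sv(2) unfolding single_valued_def by blast
      ultimately show "(a,c) \<in> Id_on (D \<inter> Domain u)" by blast
    next
      assume "(a,c) \<in> Id_on (D \<inter> Domain u)"
      then have "a = c" "c \<in> D" "a \<in> Domain u" by auto
      then obtain b where "(a,b) \<in> u" by blast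
      then show "(a,c) \<in> (u O converse u) O Id_on D" using \<open>a = c\<close> \<open>c \<in> D\<close> by blast
    qed
    then show "pr \<in> pmult (Id_on D) (pmult (converse u) u) \<longleftrightarrow> pr \<in> Id_on (D \<inter> Domain u)"
      unfolding pr pmult_def by simp
  qed
  have c1: "pmult (Id_on D) (pmult (converse u) u) = Id_on D \<longleftrightarrow> D \<subseteq> Domain u" for D
  proof -
    have "Id_on (D \<inter> Domain u) = Id_on D \<longleftrightarrow> D \<inter> Domain u = D"
    proof
      assume "Id_on (D \<inter> Domain u) = Id_on D"
      then have "Domain (Id_on (D \<inter> Domain u)) = Domain (Id_on D)" by simp
      then show "D \<inter> Domain u = D" by simp
    qed simp
    then show ?thesis unfolding c0 by blast
  qed
  have c2: "pmult (pmult (pmult u (Id_on D)) (converse u)) (Id_on D) \<noteq> {} \<longleftrightarrow> (\<exists>x\<in>D. \<exists>y\<in>D. (x,y) \<in> u)" for D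
  proof
    assume "pmult (pmult (pmult u (Id_on D)) (converse u)) (Id_on D) \<noteq> {}"
    then have "Id_on D O (converse u O (Id_on D O u)) \<noteq> {}" unfolding pmult_def by simp
    then obtain pr where "pr \<in> Id_on D O (converse u O (Id_on D O u))" by blast
    then obtain a c where "(a,c) \<in> Id_on D O (converse u O (Id_on D O u))" by (metis surj_pair)
    then obtain b where "a \<in> D" "(b,a) \<in> u" "b \<in> D" by blast
    then show "\<exists>x\<in>D. \<exists>y\<in>D. (x,y) \<in> u" by blast
  next
    assume "\<exists>x\<in>D. \<exists>y\<in>D. (x,y) \<in> u"
    then obtain x y where "x \<in> D" "y \<in> D" "(x,y) \<in> u" by blast
    then have "(y,y) \<in> Id_on D O (converse u O (Id_on D O u))" by blast
    then have "Id_on D O (converse u O (Id_on D O u)) \<noteq> {}" by blast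
    then show "pmult (pmult (pmult u (Id_on D)) (converse u)) (Id_on D) \<noteq> {}" unfolding pmult_def by simp
  qed
  have c3: "pmult (Id_on D) (Id_on D) = Id_on D" for D unfolding pmult_def by auto
  show ?thesis
  proof
    assume "u \<in> Iso"
    show "\<forall>D. Id_on D \<in> SL \<longrightarrow> D \<noteq> {} \<longrightarrow> D \<subseteq> Domain u \<longrightarrow> (\<exists>x\<in>D. \<exists>y\<in>D. (x,y) \<in> u)"
    proof (intro allI impI)
      fix D assume D: "Id_on D \<in> SL" "D \<noteq> {}" "D \<subseteq> Domain u"
      have "Id_on D \<noteq> {}" using D(2) by auto
      moreover have "pmult (Id_on D) (pmult (converse u) u) = Id_on D" using c1 D(3) by blast
      moreover have "\<forall>e \<in> SL. pmult e e = e \<longrightarrow> e \<noteq> {} \<longrightarrow>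
        pmult e (pmult (converse u) u) = e \<longrightarrow>
        pmult (pmult (pmult u e) (converse u)) e \<noteq> {}" using \<open>u \<in> Iso\<close> unfolding S_Iso_def by simp
      ultimately have "pmult (pmult (pmult u (Id_on D)) (converse u)) (Id_on D) \<noteq> {}"
        using D(1) c3[of D] by simp
      then show "\<exists>x\<in>D. \<exists>y\<in>D. (x,y) \<in> u" using c2 by blast
    qed
  next
    assume H: "\<forall>D. Id_on D \<in> SL \<longrightarrow> D \<noteq> {} \<longrightarrow> D \<subseteq> Domain u \<longrightarrow> (\<exists>x\<in>D. \<exists>y\<in>D. (x,y) \<in> u)"
    show "u \<in> Iso" unfolding S_Iso_def
    proof (intro CollectI conjI ballI impI assms)
      fix e assume e: "e \<in> SL" "pmult e e = e" "e \<noteq> {}" "pmult e (pmult (converse u) u) = e"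
      have eq: "e = Id_on (Domain e)" using idem_Id_on[OF SL_pinj[OF e(1)] e(2)] .
      have "Domain e \<noteq> {}" using e(3) by auto
      moreover have "Domain e \<subseteq> Domain u" using c1[of "Domain e"] e(4) eq by simp
      moreover have "Id_on (Domain e) \<in> SL" using e(1) eq by simp
      ultimately have "\<exists>x\<in>Domain e. \<exists>y\<in>Domain e. (x,y) \<in> u" using H by blast
      then have "pmult (pmult (pmult u (Id_on (Domain e))) (converse u)) (Id_on (Domain e)) \<noteq> {}"
        using c2 by blast
      then show "pmult (pmult (pmult u e) (converse u)) e \<noteq> {}" using eq by simp
    qed
  qed
qed

lemma img_SL: assumes "Id_on D \<in> SL" "v \<in> SL" shows "Id_on (v `` D) \<in> SL"
proof -
  have sv: "single_valued v" using SL_pinj[OF assms(2)] pinj_def by auto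
  have "pmult (pmult v (Id_on D)) (converse v) = Id_on (v `` D)"
    using sv unfolding pmult_def single_valued_def by auto
  moreover have "pmult (pmult v (Id_on D)) (converse v) \<in> SL"
    using assms by (intro S_Lambda.mult S_Lambda.inv)
  ultimately show ?thesis by simp
qed

lemma int_SL: assumes "Id_on A \<in> SL" "Id_on B \<in> SL" shows "Id_on (A \<inter> B) \<in> SL"
proof -
  have "pmult (Id_on A) (Id_on B) = Id_on (A \<inter> B)" unfolding pmult_def by auto
  moreover have "pmult (Id_on A) (Id_on B) \<in> SL" using assms by (intro S_Lambda.mult)
  ultimately show ?thesis by simp
qed

lemma Iso_SL: "u \<in> Iso \<Longrightarrow> u \<in> SL" unfolding S_Iso_def by simp

lemma Iso_mult: assumes u: "u \<in> Iso" and v: "v \<in> Iso" shows "pmult u v \<in> Iso"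
proof -
  have uS: "u \<in> SL" and vS: "v \<in> SL" using u v Iso_SL by auto
  have wS: "pmult u v \<in> SL" using uS vS by (rule S_Lambda.mult)
  have svv: "single_valued v" using SL_pinj[OF vS] pinj_def by auto
  have Hu: "\<And>D. Id_on D \<in> SL \<Longrightarrow> D \<noteq> {} \<Longrightarrow> D \<subseteq> Domain u \<Longrightarrow> \<exists>x\<in>D. \<exists>y\<in>D. (x,y) \<in> u"
    using u iso_iff[OF uS] by blast
  have Hv: "\<And>D. Id_on D \<in> SL \<Longrightarrow> D \<noteq> {} \<Longrightarrow> D \<subseteq> Domain v \<Longrightarrow> \<exists>x\<in>D. \<exists>y\<in>D. (x,y) \<in> v"
    using v iso_iff[OF vS] by blast
  show ?thesis unfolding iso_iff[OF wS]
  proof (intro allI impI)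
    fix D assume D: "Id_on D \<in> SL" "D \<noteq> {}" "D \<subseteq> Domain (pmult u v)"
    have Dw: "D \<subseteq> Domain (v O u)" using D(3) by (simp add: pmult_def)
    then have "D \<subseteq> Domain v" by blast
    then obtain x y where xy: "x \<in> D" "y \<in> D" "(x,y) \<in> v" using Hv D by blast
    define D1 where "D1 = D \<inter> (converse v) `` D"
    have D1S: "Id_on D1 \<in> SL" unfolding D1_def using D(1) img_SL[OF D(1) S_Lambda.inv[OF vS]] by (rule int_SL)
    define D2 where "D2 = v `` D1"
    have D2S: "Id_on D2 \<in> SL" unfolding D2_def using D1S vS by (rule img_SL)
    have "x \<in> D1" using xy unfolding D1_def by auto
    then have "D2 \<noteq> {}" using xy unfolding D2_def by auto
    moreover have "D2 \<subseteq> D \<inter> Domain u"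
    proof
      fix z assume "z \<in> D2"
      then obtain x' where x': "x' \<in> D1" "(x',z) \<in> v" unfolding D2_def by auto
      then obtain y' where "y' \<in> D" "(x',y') \<in> v" unfolding D1_def by auto
      then have "z \<in> D" using x' svv unfolding single_valued_def by blast
      moreover obtain y'' w where "(x',y'') \<in> v" "(y'',w) \<in> u" using Dw x' D1_def by blast
      then have "z \<in> Domain u" using x' svv unfolding single_valued_def by blast
      ultimately show "z \<in> D \<inter> Domain u" by blast
    qed
    ultimately obtain z z' where zz: "z \<in> D2" "z' \<in> D2" "(z,z') \<in> u" using Hu D2S by blast
    then obtain x' where x': "x' \<in> D1" "(x',z) \<in> v" unfolding D2_def by auto
    have "(x', z') \<in> pmult u v" using x' zz unfolding pmult_def by blast
    moreover have "x' \<in> D" using x' D1_def by auto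
    moreover have "z' \<in> D" using zz \<open>D2 \<subseteq> D \<inter> Domain u\<close> by blast
    ultimately show "\<exists>x\<in>D. \<exists>y\<in>D. (x,y) \<in> pmult u v" by blast
  qed
qed

lemma Iso_inv: assumes u: "u \<in> Iso" shows "converse u \<in> Iso"
proof -
  have uS: "u \<in> SL" using u Iso_SL by auto
  have wS: "converse u \<in> SL" using uS by (rule S_Lambda.inv)
  have svu: "single_valued u" using SL_pinj[OF uS] pinj_def by auto
  have Hu: "\<And>D. Id_on D \<in> SL \<Longrightarrow> D \<noteq> {} \<Longrightarrow> D \<subseteq> Domain u \<Longrightarrow> \<exists>x\<in>D. \<exists>y\<in>D. (x,y) \<in> u"
    using u iso_iff[OF uS] by blast
  show ?thesis unfolding iso_iff[OF wS]
  proof (intro allI impI)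
    fix D assume D: "Id_on D \<in> SL" "D \<noteq> {}" "D \<subseteq> Domain (converse u)"
    define D' where "D' = converse u `` D"
    have D'S: "Id_on D' \<in> SL" unfolding D'_def using D(1) wS by (rule img_SL)
    have "D' \<noteq> {}" using D(2,3) unfolding D'_def by auto
    moreover have "D' \<subseteq> Domain u" unfolding D'_def by auto
    ultimately obtain x y where xy: "x \<in> D'" "y \<in> D'" "(x,y) \<in> u" using Hu D'S by blast
    obtain z where z: "z \<in> D" "(y,z) \<in> u" using xy(2) D'_def by auto
    obtain z' where z': "z' \<in> D" "(x,z') \<in> u" using xy(1) D'_def by auto
    have "z' = y" using z' xy svu unfolding single_valued_def by blast
    then have "y \<in> D" using z' by simp
    then show "\<exists>x\<in>D. \<exists>y\<in>D. (x,y) \<in> converse u" using z by blast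
  qed
qed

lemma Iso_zero: "{} \<in> Iso"
  using iso_iff[OF S_Lambda.zero] by auto


lemma span_mem: "(x,y) \<in> span a b \<longleftrightarrow> (\<exists>z. x = cmp b z \<and> y = cmp a z \<and> z \<in> L \<and> r z = s a \<and> r z = s b)"
  unfolding span_eq by auto

lemma prod_eq:
  assumes L1: "\<forall>i<n. al i \<in> L \<and> be i \<in> L" and L2: "\<forall>j<m. ga j \<in> L \<and> de j \<in> L"
    and GG: "\<forall>i<n. \<forall>j<m. G i j \<subseteq> L \<and> RI (be i) \<inter> RI (ga j) = (\<Union>f\<in>G i j. RI f)"
    and PP: "\<forall>i<n. \<forall>j<m. \<forall>f\<in>G i j. P i j f \<in> L \<and> s (be i) = r (P i j f) \<and> f = cmp (be i) (P i j f)"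
    and QQ: "\<forall>i<n. \<forall>j<m. \<forall>f\<in>G i j. Q i j f \<in> L \<and> s (ga j) = r (Q i j f) \<and> f = cmp (ga j) (Q i j f)"
    and K: "K = {(i,j,f). i<n \<and> j<m \<and> s (al i) = s (be i) \<and> s (ga j) = s (de j) \<and> f \<in> G i j}"
  shows "pmult (\<Union>i<n. span (al i) (be i)) (\<Union>j<m. span (ga j) (de j)) =
    (\<Union>(i,j,f)\<in>K. span (cmp (al i) (P i j f)) (cmp (de j) (Q i j f)))"
proof (rule set_eqI)
  fix pr :: "'a \<times> 'a"
  obtain a c where pr: "pr = (a,c)" by (cases pr)
  show "pr \<in> pmult (\<Union>i<n. span (al i) (be i)) (\<Union>j<m. span (ga j) (de j)) \<longleftrightarrow>
    pr \<in> (\<Union>(i,j,f)\<in>K. span (cmp (al i) (P i j f)) (cmp (de j) (Q i j f)))"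
  proof
    assume "pr \<in> pmult (\<Union>i<n. span (al i) (be i)) (\<Union>j<m. span (ga j) (de j))"
    then obtain b i j where ij: "i < n" "j < m" "(a,b) \<in> span (ga j) (de j)" "(b,c) \<in> span (al i) (be i)"
      unfolding pr pmult_def[of "\<Union>i<n. span (al i) (be i)"] by blast
    obtain w where w: "a = cmp (de j) w" "b = cmp (ga j) w" "w \<in> L" "r w = s (ga j)" "r w = s (de j)"
      using ij(3) unfolding span_mem by blast
    obtain z where z: "b = cmp (be i) z" "c = cmp (al i) z" "z \<in> L" "r z = s (al i)" "r z = s (be i)"
      using ij(4) unfolding span_mem by blast
    have Li: "al i \<in> L" "be i \<in> L" "ga j \<in> L" "de j \<in> L" using L1 L2 ij by auto
    have "b \<in> RI (be i)" using z unfolding RI_iff by auto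
    moreover have "b \<in> RI (ga j)" using w unfolding RI_iff by auto
    ultimately have "b \<in> (\<Union>f\<in>G i j. RI f)" using GG ij by blast
    then obtain f where f: "f \<in> G i j" "b \<in> RI f" by blast
    then obtain t where t: "t \<in> L" "s f = r t" "b = cmp f t" unfolding RI_iff by auto
    define p where "p = P i j f"
    define q where "q = Q i j f"
    have p: "p \<in> L" "s (be i) = r p" "f = cmp (be i) p" using PP ij f unfolding p_def by auto
    have q: "q \<in> L" "s (ga j) = r q" "f = cmp (ga j) q" using QQ ij f unfolding q_def by auto
    have sp: "s p = r t" using t(2) s_cmp[OF Li(2) p(1) p(2)] p(3) by simp
    have sq: "s q = r t" using t(2) s_cmp[OF Li(3) q(1) q(2)] q(3) by simp
    have ptL: "cmp p t \<in> L" "r (cmp p t) = r p" using cmpL[OF p(1) t(1) sp] r_cmp[OF p(1) t(1) sp] by auto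
    have qtL: "cmp q t \<in> L" "r (cmp q t) = r q" using cmpL[OF q(1) t(1) sq] r_cmp[OF q(1) t(1) sq] by auto
    have "cmp (be i) z = cmp (be i) (cmp p t)" using z(1) t(3) p(3) assoc[OF Li(2) p(1) t(1) p(2) sp] by simp
    then have zpt: "z = cmp p t" using lcancel[OF Li(2) z(3) ptL(1)] z(5) ptL(2) p(2) by simp
    have "cmp (ga j) w = cmp (ga j) (cmp q t)" using w(2) z(1) t(3) q(3) assoc[OF Li(3) q(1) t(1) q(2) sq] by simp
    then have wqt: "w = cmp q t" using lcancel[OF Li(3) w(3) qtL(1)] w(4) qtL(2) q(2) by simp
    have sdq: "s (de j) = r q" using w(4,5) q(2) by simp
    have saq: "s (al i) = r p" using z(4,5) p(2) by simp
    have a2: "a = cmp (cmp (de j) q) t" using w(1) wqt assoc[OF Li(4) q(1) t(1) sdq sq] by simp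
    have c2: "c = cmp (cmp (al i) p) t" using z(2) zpt assoc[OF Li(1) p(1) t(1) saq sp] by simp
    have "(a,c) \<in> span (cmp (al i) p) (cmp (de j) q)"
      unfolding span_mem using a2 c2 t(1) sp sq s_cmp[OF Li(1) p(1) saq] s_cmp[OF Li(4) q(1) sdq] by auto
    moreover have "(i,j,f) \<in> K" using K ij w z f by auto
    ultimately show "pr \<in> (\<Union>(i,j,f)\<in>K. span (cmp (al i) (P i j f)) (cmp (de j) (Q i j f)))"
      unfolding pr p_def q_def by blast
  next
    assume "pr \<in> (\<Union>(i,j,f)\<in>K. span (cmp (al i) (P i j f)) (cmp (de j) (Q i j f)))"
    then obtain i j f where ijf: "(i,j,f) \<in> K" "(a,c) \<in> span (cmp (al i) (P i j f)) (cmp (de j) (Q i j f))"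
      unfolding pr by blast
    have ij: "i < n" "j < m" "s (al i) = s (be i)" "s (ga j) = s (de j)" "f \<in> G i j" using ijf(1) K by auto
    have Li: "al i \<in> L" "be i \<in> L" "ga j \<in> L" "de j \<in> L" using L1 L2 ij by auto
    define p where "p = P i j f"
    define q where "q = Q i j f"
    have p: "p \<in> L" "s (be i) = r p" "f = cmp (be i) p" using PP ij unfolding p_def by auto
    have q: "q \<in> L" "s (ga j) = r q" "f = cmp (ga j) q" using QQ ij unfolding q_def by auto
    have sdq: "s (de j) = r q" using ij(4) q(2) by simp
    have saq: "s (al i) = r p" using ij(3) p(2) by simp
    obtain t where t: "a = cmp (cmp (de j) q) t" "c = cmp (cmp (al i) p) t" "t \<in> L"
       "r t = s (cmp (al i) p)" "r t = s (cmp (de j) q)"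
      using ijf(2) unfolding span_mem p_def q_def by blast
    have sp: "s p = r t" using t(4) s_cmp[OF Li(1) p(1) saq] by simp
    have sq: "s q = r t" using t(5) s_cmp[OF Li(4) q(1) sdq] by simp
    have a2: "a = cmp (de j) (cmp q t)" using t(1) assoc[OF Li(4) q(1) t(3) sdq sq] by simp
    have c2: "c = cmp (al i) (cmp p t)" using t(2) assoc[OF Li(1) p(1) t(3) saq sp] by simp
    define b where "b = cmp (be i) (cmp p t)"
    have "b = cmp f t" unfolding b_def using p(3) assoc[OF Li(2) p(1) t(3) p(2) sp] by simp
    also have "\<dots> = cmp (ga j) (cmp q t)" using q(3) assoc[OF Li(3) q(1) t(3) q(2) sq] by simp
    finally have b2: "b = cmp (ga j) (cmp q t)" .
    have pt: "cmp p t \<in> L" "r (cmp p t) = r p" using cmpL[OF p(1) t(3) sp] r_cmp[OF p(1) t(3) sp] by auto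
    have qt: "cmp q t \<in> L" "r (cmp q t) = r q" using cmpL[OF q(1) t(3) sq] r_cmp[OF q(1) t(3) sq] by auto
    have "(a,b) \<in> span (ga j) (de j)" unfolding span_mem using a2 b2 qt q(2) sdq by auto
    moreover have "(b,c) \<in> span (al i) (be i)" unfolding span_mem using c2 b_def pt p(2) saq by auto
    ultimately show "pr \<in> pmult (\<Union>i<n. span (al i) (be i)) (\<Union>j<m. span (ga j) (de j))"
      unfolding pr pmult_def[of "\<Union>i<n. span (al i) (be i)"] using ij by blast
  qed
qed


lemma UdomI: assumes "u \<in> SL" shows "Id_on (Domain u) \<in> SL"
proof -
  have sv: "single_valued (converse u)" using SL_pinj[OF assms] pinj_def by auto
  have "pmult (converse u) u = Id_on (Domain u)"
  proof (rule set_eqI)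
    fix pr :: "'a \<times> 'a"
    obtain a c where pr: "pr = (a,c)" by (cases pr)
    have "(a,c) \<in> u O converse u \<longleftrightarrow> (a,c) \<in> Id_on (Domain u)"
    proof
      assume "(a,c) \<in> u O converse u"
      then obtain b where "(a,b) \<in> u" "(c,b) \<in> u" by blast
      moreover then have "a = c" using sv unfolding single_valued_def by blast
      ultimately show "(a,c) \<in> Id_on (Domain u)" by blast
    next
      assume "(a,c) \<in> Id_on (Domain u)"
      then have "a = c" "a \<in> Domain u" by auto
      then obtain b where "(a,b) \<in> u" by blast
      then show "(a,c) \<in> u O converse u" using \<open>a = c\<close> by blast
    qed
    then show "pr \<in> pmult (converse u) u \<longleftrightarrow> pr \<in> Id_on (Domain u)" unfolding pr pmult_def by simp
  qed
  moreover have "pmult (converse u) u \<in> SL" using assms by (intro S_Lambda.mult S_Lambda.inv)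
  ultimately show ?thesis by simp
qed

lemma Iso_obj:
  assumes "u \<in> Iso" "u \<noteq> {}" "Domain u \<subseteq> obj_slice L r Y" "Range u \<subseteq> obj_slice L r X"
  shows "X = Y"
proof -
  have uS: "u \<in> SL" using assms(1) Iso_SL by auto
  have "Domain u \<noteq> {}" using assms(2) by auto
  then obtain x y where "x \<in> Domain u" "y \<in> Domain u" "(x,y) \<in> u"
    using assms(1) iso_iff[OF uS] UdomI[OF uS] by blast
  then have "y \<in> obj_slice L r Y" "y \<in> obj_slice L r X" using assms(3,4) by auto
  then show ?thesis unfolding obj_slice_def by simp
qed

lemma exh_self: assumes "X \<in> Obj" "B \<subseteq> obj_slice L r X" "X \<in> B"
  shows "exhaustive L Obj r s cmp B"
  unfolding exhaustive_def
proof (intro bexI[of _ X] assms(1))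
  show "exhaustive_at L r s cmp X B" unfolding exhaustive_at_def
  proof (intro conjI ballI assms(2))
    fix a assume a: "a \<in> obj_slice L r X"
    then have aL: "a \<in> L" "r a = X" unfolding obj_slice_def by auto
    have "a \<in> RI a" unfolding RI_iff using aL idr[OF aL(1)] s_Obj[OF aL(1)] Obj_sub obj_r by auto
    moreover have "a \<in> RI X" unfolding RI_iff using aL idl[OF aL(1)] obj_s[OF assms(1)] by auto
    ultimately show "\<exists>b\<in>B. RI a \<inter> RI b \<noteq> {}" using assms(3) by blast
  qed
qed

abbreviation "FP u (n::nat) al be \<equiv> n \<ge> 1 \<and> (\<forall>i<n. al i \<in> L \<and> be i \<in> L) \<and>
      u = (\<Union>i<n. span (al i) (be i)) \<and> u \<in> Iso \<and>
      exhaustive L Obj r s cmp (al ` {..<n}) \<and> exhaustive L Obj r s cmp (be ` {..<n})"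

lemma F_D: assumes "u \<in> F_Lambda L Obj r s cmp"
  shows "u = {} \<or> (\<exists>(n::nat) al be. FP u n al be)"
proof -
  have "(\<exists>(n::nat) al be. FP u n al be) \<or> u \<in> {{}}" using assms unfolding F_Lambda_def Un_iff mem_Collect_eq .
  then show ?thesis by blast
qed

lemma F_zero: "{} \<in> F_Lambda L Obj r s cmp" unfolding F_Lambda_def by simp

lemma F_intro: assumes "(n::nat) \<ge> 1" "\<forall>i<n. al i \<in> L \<and> be i \<in> L"
      "u = (\<Union>i<n. span (al i) (be i))" "u \<in> Iso"
      "exhaustive L Obj r s cmp (al ` {..<n})" "exhaustive L Obj r s cmp (be ` {..<n})"
  shows "u \<in> F_Lambda L Obj r s cmp"
proof -
  have "\<exists>(n::nat) (al::nat \<Rightarrow> 'a) (be::nat \<Rightarrow> 'a). n \<ge> 1 \<and>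
        (\<forall>i<n. al i \<in> L \<and> be i \<in> L) \<and>
        u = (\<Union>i<n. span (al i) (be i)) \<and>
        u \<in> Iso \<and>
        exhaustive L Obj r s cmp (al ` {..<n}) \<and>
        exhaustive L Obj r s cmp (be ` {..<n})" using assms by blast
  then show ?thesis unfolding F_Lambda_def Un_iff mem_Collect_eq by (rule disjI1)
qed

lemma F_sub: "u \<in> F_Lambda L Obj r s cmp \<Longrightarrow> u \<in> Iso"
  using F_D Iso_zero by blast

lemma conv_span: "converse (span a b) = span b a"
  unfolding pmult_def by (simp add: converse_relcomp)

lemma F_conv: assumes "u \<in> F_Lambda L Obj r s cmp" shows "converse u \<in> F_Lambda L Obj r s cmp"
proof -
  have "u = {} \<or> (\<exists>(n::nat) al be. FP u n al be)" using F_D[OF assms] .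
  then show ?thesis
  proof
    assume "u = {}" then show ?thesis using F_zero by simp
  next
    assume "\<exists>(n::nat) al be. FP u n al be"
    then obtain n al be where 2: "FP u n al be" by blast
    have "converse u = (\<Union>i<n. span (be i) (al i))" using 2 by (simp add: converse_UNION conv_span)
    moreover have "converse u \<in> Iso" using 2 Iso_inv by blast
    ultimately show ?thesis using 2 by (intro F_intro[of n be al]) auto
  qed
qed

lemma mkF: assumes "finite P" "P \<noteq> {}" "P \<subseteq> L \<times> L" "w = (\<Union>pr\<in>P. span (fst pr) (snd pr))" "w \<in> Iso"
   "exhaustive L Obj r s cmp (fst ` P)" "exhaustive L Obj r s cmp (snd ` P)"
  shows "w \<in> F_Lambda L Obj r s cmp"
proof -
  obtain h where h: "bij_betw h {0..<card P} P" using ex_bij_betw_nat_finite[OF assms(1)] by blast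
  define n where "n = card P"
  have n1: "n \<ge> 1" unfolding n_def using assms(1,2) by (simp add: Suc_le_eq card_gt_0_iff)
  have hP: "h ` {..<n} = P" using h unfolding n_def bij_betw_def by (simp add: atLeast0LessThan)
  have "\<forall>i<n. fst (h i) \<in> L \<and> snd (h i) \<in> L" using hP assms(3) by auto
  moreover have "w = (\<Union>i<n. span (fst (h i)) (snd (h i)))" using assms(4) hP by auto
  moreover have "(\<lambda>i. fst (h i)) ` {..<n} = fst ` P" using hP by auto
  moreover have "(\<lambda>i. snd (h i)) ` {..<n} = snd ` P" using hP by auto
  ultimately show ?thesis using n1 assms(5,6,7) by (intro F_intro[of n "\<lambda>i. fst (h i)" "\<lambda>i. snd (h i)"]) auto
qed


lemma meet:
  assumes L: "e \<in> L" "al \<in> L" "be \<in> L" "ga \<in> L" and sab: "s al = s be"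
    and ab: "a \<in> L" "b \<in> L" "s e = r a" "s al = r b" "cmp e a = cmp al b"
    and cd: "c \<in> L" "d \<in> L" "s (cmp be b) = r c" "s ga = r d" "cmp (cmp be b) c = cmp ga d"
    and G: "RI be \<inter> RI ga = (\<Union>f\<in>G. RI f)"
    and pf: "\<forall>f\<in>G. pf f \<in> L \<and> s be = r (pf f) \<and> f = cmp be (pf f)"
  shows "\<exists>f\<in>G. RI e \<inter> RI (cmp al (pf f)) \<noteq> {}"
proof -
  have sbb: "s be = r b" using sab ab(4) by simp
  have sb: "s (cmp be b) = s b" using s_cmp[OF L(3) ab(2) sbb] .
  have sbc: "s b = r c" using sb cd(3) by simp
  have bc: "cmp b c \<in> L" "r (cmp b c) = r b" using cmpL[OF ab(2) cd(1) sbc] r_cmp[OF ab(2) cd(1) sbc] by auto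
  define e1 where "e1 = cmp be (cmp b c)"
  have e1': "e1 = cmp (cmp be b) c" unfolding e1_def using assoc[OF L(3) ab(2) cd(1) sbb sbc] by simp
  have "e1 \<in> RI be" unfolding RI_iff e1_def using bc sbb by auto
  moreover have "e1 \<in> RI ga" unfolding RI_iff using e1' cd by auto
  ultimately have "e1 \<in> (\<Union>f\<in>G. RI f)" using G by blast
  then obtain f where f: "f \<in> G" "e1 \<in> RI f" by blast
  then obtain t where t: "t \<in> L" "s f = r t" "e1 = cmp f t" unfolding RI_iff by auto
  define p where "p = pf f"
  have p: "p \<in> L" "s be = r p" "f = cmp be p" using pf f(1) unfolding p_def by auto
  have sp: "s p = r t" using t(2) s_cmp[OF L(3) p(1) p(2)] p(3) by simp
  have pt: "cmp p t \<in> L" "r (cmp p t) = r p" using cmpL[OF p(1) t(1) sp] r_cmp[OF p(1) t(1) sp] by auto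
  have "cmp be (cmp b c) = cmp be (cmp p t)" using e1_def t(3) p(3) assoc[OF L(3) p(1) t(1) p(2) sp] by simp
  then have bcpt: "cmp b c = cmp p t" using lcancel[OF L(3) bc(1) pt(1)] bc(2) pt(2) sbb p(2) by simp
  have "s a = s (cmp e a)" using s_cmp[OF L(1) ab(1) ab(3)] by simp
  also have "\<dots> = s b" using ab(5) s_cmp[OF L(2) ab(2) ab(4)] by simp
  finally have sac: "s a = r c" using sbc by simp
  have ac: "cmp a c \<in> L" "r (cmp a c) = r a" using cmpL[OF ab(1) cd(1) sac] r_cmp[OF ab(1) cd(1) sac] by auto
  define x where "x = cmp e (cmp a c)"
  have "x \<in> RI e" unfolding RI_iff x_def using ac ab(3) by auto
  moreover have "x \<in> RI (cmp al p)"
  proof -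
    have sap: "s al = r p" using sab p(2) by simp
    have "x = cmp (cmp e a) c" unfolding x_def using assoc[OF L(1) ab(1) cd(1) ab(3) sac] by simp
    also have "\<dots> = cmp (cmp al b) c" using ab(5) by simp
    also have "\<dots> = cmp al (cmp b c)" using assoc[OF L(2) ab(2) cd(1) ab(4) sbc] .
    also have "\<dots> = cmp al (cmp p t)" using bcpt by simp
    also have "\<dots> = cmp (cmp al p) t" using assoc[OF L(2) p(1) t(1) sap sp] by simp
    finally show ?thesis unfolding RI_iff using t(1) s_cmp[OF L(2) p(1) sap] sp by auto
  qed
  ultimately show ?thesis using f(1) p_def by blast
qed


lemma exh_D: assumes "exhaustive L Obj r s cmp (al ` {..<(n::nat)})"
  obtains X where "X \<in> Obj" "\<forall>i<n. al i \<in> obj_slice L r X"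
    "\<forall>e\<in>obj_slice L r X. \<exists>i<n. RI e \<inter> RI (al i) \<noteq> {}"
proof -
  obtain X where X: "X \<in> Obj" "exhaustive_at L r s cmp X (al ` {..<n})" using assms unfolding exhaustive_def by blast
  then have "\<forall>i<n. al i \<in> obj_slice L r X" unfolding exhaustive_at_def by auto
  moreover have "\<forall>e\<in>obj_slice L r X. \<exists>i<n. RI e \<inter> RI (al i) \<noteq> {}"
    using X(2) unfolding exhaustive_at_def by (simp add: lessThan_iff Bex_def)
  ultimately show ?thesis using X(1) that by blast
qed

lemma exh_I: assumes "X \<in> Obj" "B \<subseteq> obj_slice L r X" "\<forall>e\<in>obj_slice L r X. \<exists>b\<in>B. RI e \<inter> RI b \<noteq> {}"
  shows "exhaustive L Obj r s cmp B"
  using assms unfolding exhaustive_def exhaustive_at_def by blast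

lemma obj_in: "X \<in> Obj \<Longrightarrow> X \<in> obj_slice L r X"
  unfolding obj_slice_def using Obj_sub obj_r by auto

lemma span_fake: "s a \<noteq> s b \<Longrightarrow> span a b = {}"
  unfolding span_eq by auto

lemma dom_range: assumes "\<forall>i<n. al i \<in> obj_slice L r X \<and> be i \<in> obj_slice L r Y"
  shows "Domain (\<Union>i<n. span (al i) (be i)) \<subseteq> obj_slice L r Y"
    "Range (\<Union>i<n. span (al i) (be i)) \<subseteq> obj_slice L r X"
proof -
  show "Domain (\<Union>i<n. span (al i) (be i)) \<subseteq> obj_slice L r Y"
  proof
    fix x assume "x \<in> Domain (\<Union>i<n. span (al i) (be i))"
    then obtain i y where "i < n" "(x,y) \<in> span (al i) (be i)" by blast
    then obtain z where z: "x = cmp (be i) z" "z \<in> L" "r z = s (be i)" unfolding span_mem by blast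
    have "be i \<in> L" "r (be i) = Y" using assms \<open>i < n\<close> unfolding obj_slice_def by auto
    then show "x \<in> obj_slice L r Y" unfolding obj_slice_def using z cmpL r_cmp by auto
  qed
  show "Range (\<Union>i<n. span (al i) (be i)) \<subseteq> obj_slice L r X"
  proof
    fix x assume "x \<in> Range (\<Union>i<n. span (al i) (be i))"
    then obtain i y where "i < n" "(y,x) \<in> span (al i) (be i)" by blast
    then obtain z where z: "x = cmp (al i) z" "z \<in> L" "r z = s (al i)" unfolding span_mem by blast
    have "al i \<in> L" "r (al i) = X" using assms \<open>i < n\<close> unfolding obj_slice_def by auto
    then show "x \<in> obj_slice L r X" unfolding obj_slice_def using z cmpL r_cmp by auto
  qed
qed


lemma F_mult: assumes uF: "u \<in> F_Lambda L Obj r s cmp" and vF: "v \<in> F_Lambda L Obj r s cmp"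
  shows "pmult u v \<in> F_Lambda L Obj r s cmp"
proof -
  have wI: "pmult u v \<in> Iso" using Iso_mult F_sub uF vF by blast
  have du: "u = {} \<or> (\<exists>(n::nat) al be. FP u n al be)" using F_D[OF uF] .
  have dv: "v = {} \<or> (\<exists>(n::nat) al be. FP v n al be)" using F_D[OF vF] .
  show ?thesis
  proof (cases "u = {} \<or> v = {} \<or> pmult u v = {}")
    case True
    then have "pmult u v = {}" unfolding pmult_def by auto
    then show ?thesis using F_zero by simp
  next
    case False
    then have nz: "u \<noteq> {}" "v \<noteq> {}" "pmult u v \<noteq> {}" by auto
    obtain n al be where U: "FP u n al be" using du nz by blast
    obtain m ga de where V: "FP v m ga de" using dv nz by blast
    obtain X where X: "X \<in> Obj" "\<forall>i<n. al i \<in> obj_slice L r X"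
      "\<forall>e\<in>obj_slice L r X. \<exists>i<n. RI e \<inter> RI (al i) \<noteq> {}" using exh_D[of al n] U by blast
    obtain Y where Y: "Y \<in> Obj" "\<forall>i<n. be i \<in> obj_slice L r Y"
      "\<forall>e\<in>obj_slice L r Y. \<exists>i<n. RI e \<inter> RI (be i) \<noteq> {}" using exh_D[of be n] U by blast
    obtain Y' where Y': "Y' \<in> Obj" "\<forall>j<m. ga j \<in> obj_slice L r Y'"
      "\<forall>e\<in>obj_slice L r Y'. \<exists>j<m. RI e \<inter> RI (ga j) \<noteq> {}" using exh_D[of ga m] V by blast
    obtain Z where Z: "Z \<in> Obj" "\<forall>j<m. de j \<in> obj_slice L r Z"
      "\<forall>e\<in>obj_slice L r Z. \<exists>j<m. RI e \<inter> RI (de j) \<noteq> {}" using exh_D[of de m] V by blast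
    have L1: "\<forall>i<n. al i \<in> L \<and> be i \<in> L" using U by blast
    have L2: "\<forall>j<m. ga j \<in> L \<and> de j \<in> L" using V by blast
    define G where "G (i::nat) (j::nat) = (SOME G. finite G \<and> G \<subseteq> L \<and> RI (be i) \<inter> RI (ga j) = (\<Union>f\<in>G. RI f))" for i j
    define P where "P (i::nat) (j::nat) f = (SOME p. p \<in> L \<and> s (be i) = r p \<and> f = cmp (be i) p)" for i j f
    define Q where "Q (i::nat) (j::nat) f = (SOME q. q \<in> L \<and> s (ga j) = r q \<and> f = cmp (ga j) q)" for i j f
    have G1: "finite (G i j) \<and> G i j \<subseteq> L \<and> RI (be i) \<inter> RI (ga j) = (\<Union>f\<in>G i j. RI f)" if "i < n" "j < m" for i j
    proof -
      have "\<exists>G. finite G \<and> G \<subseteq> L \<and> RI (be i) \<inter> RI (ga j) = (\<Union>f\<in>G. RI f)"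
        using falign L1 L2 that by blast
      then show ?thesis unfolding G_def by (rule someI_ex)
    qed
    have fself: "f \<in> RI f" if "f \<in> L" for f
      unfolding RI_iff using that idr[OF that] s_Obj[OF that] Obj_sub obj_r by auto
    have PP: "\<forall>i<n. \<forall>j<m. \<forall>f\<in>G i j. P i j f \<in> L \<and> s (be i) = r (P i j f) \<and> f = cmp (be i) (P i j f)"
    proof (intro allI impI ballI)
      fix i j f assume ij: "i < n" "j < m" "f \<in> G i j"
      then have "f \<in> RI (be i)" using G1[OF ij(1,2)] fself by blast
      then have "\<exists>p. p \<in> L \<and> s (be i) = r p \<and> f = cmp (be i) p" unfolding RI_iff by blast
      then show "P i j f \<in> L \<and> s (be i) = r (P i j f) \<and> f = cmp (be i) (P i j f)"
        unfolding P_def by (rule someI_ex)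
    qed
    have QQ: "\<forall>i<n. \<forall>j<m. \<forall>f\<in>G i j. Q i j f \<in> L \<and> s (ga j) = r (Q i j f) \<and> f = cmp (ga j) (Q i j f)"
    proof (intro allI impI ballI)
      fix i j f assume ij: "i < n" "j < m" "f \<in> G i j"
      then have "f \<in> RI (ga j)" using G1[OF ij(1,2)] fself by blast
      then have "\<exists>q. q \<in> L \<and> s (ga j) = r q \<and> f = cmp (ga j) q" unfolding RI_iff by blast
      then show "Q i j f \<in> L \<and> s (ga j) = r (Q i j f) \<and> f = cmp (ga j) (Q i j f)"
        unfolding Q_def by (rule someI_ex)
    qed
    have GG: "\<forall>i<n. \<forall>j<m. G i j \<subseteq> L \<and> RI (be i) \<inter> RI (ga j) = (\<Union>f\<in>G i j. RI f)" using G1 by blast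
    define K where "K = {(i,j,f). i<n \<and> j<m \<and> s (al i) = s (be i) \<and> s (ga j) = s (de j) \<and> f \<in> G i j}"
    have weq0: "pmult u v = (\<Union>(i,j,f)\<in>K. span (cmp (al i) (P i j f)) (cmp (de j) (Q i j f)))"
      using prod_eq[OF L1 L2 GG PP QQ K_def] U V by simp
    have finK: "finite K"
    proof -
      have "K \<subseteq> Sigma {..<n} (\<lambda>i. Sigma {..<m} (\<lambda>j. G i j))" unfolding K_def by auto
      moreover have "finite (Sigma {..<n} (\<lambda>i. Sigma {..<m} (\<lambda>j. G i j)))"
        using G1 by (intro finite_SigmaI) auto
      ultimately show ?thesis by (rule finite_subset)
    qed
    define PK where "PK = (\<lambda>(i,j,f). (cmp (al i) (P i j f), cmp (de j) (Q i j f))) ` K"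
    have weq: "pmult u v = (\<Union>pr\<in>PK. span (fst pr) (snd pr))"
      unfolding weq0 PK_def by (auto simp: split_def)
    have finPK: "finite PK" unfolding PK_def using finK by simp
    have PKne: "PK \<noteq> {}" using weq nz(3) by auto
    have PKprop: "fst pr \<in> obj_slice L r X \<and> snd pr \<in> obj_slice L r Z" if prPK: "pr \<in> PK" for pr
    proof -
      obtain k where k: "k \<in> K" "pr = (\<lambda>(i,j,f). (cmp (al i) (P i j f), cmp (de j) (Q i j f))) k"
        using prPK unfolding PK_def by blast
      obtain i j f where kk: "k = (i,j,f)" by (cases k) auto
      have ijf: "(i,j,f) \<in> K" "pr = (cmp (al i) (P i j f), cmp (de j) (Q i j f))" using k kk by auto
      have ij: "i < n" "j < m" "s (al i) = s (be i)" "s (ga j) = s (de j)" "f \<in> G i j"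
        using ijf(1) K_def by auto
      have p: "P i j f \<in> L" "s (al i) = r (P i j f)" using PP ij by auto
      have q: "Q i j f \<in> L" "s (de j) = r (Q i j f)" using QQ ij by auto
      have a: "al i \<in> L" "r (al i) = X" using X(2) ij unfolding obj_slice_def by auto
      have d: "de j \<in> L" "r (de j) = Z" using Z(2) ij unfolding obj_slice_def by auto
      show ?thesis using ijf(2) cmpL[OF a(1) p(1,2)] r_cmp[OF a(1) p(1,2)] cmpL[OF d(1) q(1,2)] r_cmp[OF d(1) q(1,2)] a d
        unfolding obj_slice_def by simp
    qed
    have PKL: "PK \<subseteq> L \<times> L" using PKprop unfolding obj_slice_def by fastforce
    have fstPK: "fst ` PK \<subseteq> obj_slice L r X" and sndPK: "snd ` PK \<subseteq> obj_slice L r Z" using PKprop by auto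
    have XL: "X \<in> L" "Z \<in> L" using X(1) Z(1) Obj_sub by auto
    have uI: "u \<in> Iso" and ueq: "u = (\<Union>i<n. span (al i) (be i))" using U by blast+
    have vI: "v \<in> Iso" and veq: "v = (\<Union>j<m. span (ga j) (de j))" using V by blast+
    show ?thesis
    proof (cases "X \<noteq> Z")
      case True
      define P' where "P' = insert (X,Z) PK"
      have "s X \<noteq> s Z" using True obj_s[OF X(1)] obj_s[OF Z(1)] by simp
      then have "span X Z = {}" by (rule span_fake)
      then have e1: "pmult u v = (\<Union>pr\<in>P'. span (fst pr) (snd pr))" unfolding P'_def using weq by simp
      have e2: "exhaustive L Obj r s cmp (fst ` P')"
        using exh_self[OF X(1)] fstPK obj_in[OF X(1)] unfolding P'_def by simp
      have e3: "exhaustive L Obj r s cmp (snd ` P')"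
        using exh_self[OF Z(1)] sndPK obj_in[OF Z(1)] unfolding P'_def by simp
      have e4: "finite P'" "P' \<noteq> {}" "P' \<subseteq> L \<times> L" unfolding P'_def using finPK PKL XL by auto
      show ?thesis by (rule mkF[OF e4 e1 wI e2 e3])
    next
      case False
      then have XZ: "X = Z" by simp
      show ?thesis
      proof (cases "\<exists>b0\<in>obj_slice L r X. s b0 \<noteq> X")
        case True
        then obtain b0 where b0: "b0 \<in> obj_slice L r X" "s b0 \<noteq> X" by blast
        define P' where "P' = insert (X,b0) (insert (b0,X) PK)"
        have "s X \<noteq> s b0" "s b0 \<noteq> s X" using b0(2) obj_s[OF X(1)] by auto
        then have "span X b0 = {}" "span b0 X = {}" by (simp_all add: span_fake)
        then have e1: "pmult u v = (\<Union>pr\<in>P'. span (fst pr) (snd pr))" unfolding P'_def using weq by simp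
        have e2: "exhaustive L Obj r s cmp (fst ` P')"
          using exh_self[OF X(1)] fstPK obj_in[OF X(1)] b0(1) unfolding P'_def by simp
        have e3: "exhaustive L Obj r s cmp (snd ` P')"
          using exh_self[OF X(1)] sndPK obj_in[OF X(1)] b0(1) XZ unfolding P'_def by simp
        have b0L: "b0 \<in> L" using b0(1) unfolding obj_slice_def by simp
        have e4: "finite P'" "P' \<noteq> {}" "P' \<subseteq> L \<times> L" unfolding P'_def using finPK PKL XL b0L by auto
        show ?thesis by (rule mkF[OF e4 e1 wI e2 e3])
      next
        case False
        then have allX: "\<And>b. b \<in> obj_slice L r X \<Longrightarrow> s b = X" by blast
        have "\<forall>i<n. al i \<in> obj_slice L r X \<and> be i \<in> obj_slice L r Y" using X(2) Y(2) by simp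
        note dr = dom_range[OF this]
        have XY: "X = Y" using Iso_obj[OF uI nz(1)] dr ueq by simp
        have "\<forall>j<m. ga j \<in> obj_slice L r Y' \<and> de j \<in> obj_slice L r Z" using Y'(2) Z(2) by simp
        note dr2 = dom_range[OF this]
        have "Y' = Z" using Iso_obj[OF vI nz(2)] dr2 veq by simp
        then have XY': "X = Y'" using XZ by simp
        have sA: "s (al i) = X" "s (be i) = X" if "i < n" for i using allX X(2) Y(2) XY that by auto
        have sB: "s (ga j) = X" "s (de j) = X" if "j < m" for j using allX Y'(2) Z(2) XY' XZ that by auto
        have inK: "(i,j,f) \<in> K" if "i < n" "j < m" "f \<in> G i j" for i j f
          unfolding K_def using that sA sB by auto
        have ex1: "\<forall>e\<in>obj_slice L r X. \<exists>b\<in>fst ` PK. RI e \<inter> RI b \<noteq> {}"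
        proof
          fix e assume e: "e \<in> obj_slice L r X"
          then have eL: "e \<in> L" "r e = X" unfolding obj_slice_def by auto
          obtain i where i: "i < n" "RI e \<inter> RI (al i) \<noteq> {}" using X(3) e by blast
          then obtain x where "x \<in> RI e" "x \<in> RI (al i)" by blast
          then obtain a b where ab: "a \<in> L" "s e = r a" "x = cmp e a" "b \<in> L" "s (al i) = r b" "x = cmp (al i) b"
            unfolding RI_iff by blast
          have bi: "be i \<in> L" "r (be i) = X" "al i \<in> L" using Y(2) XY i(1) L1 unfolding obj_slice_def by auto
          have sbb: "s (be i) = r b" using sA[OF i(1)] ab(5) by simp
          have "cmp (be i) b \<in> obj_slice L r Y'" unfolding obj_slice_def
            using cmpL[OF bi(1) ab(4) sbb] r_cmp[OF bi(1) ab(4) sbb] bi(2) XY' by simp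
          then obtain j where j: "j < m" "RI (cmp (be i) b) \<inter> RI (ga j) \<noteq> {}" using Y'(3) by blast
          then obtain y where "y \<in> RI (cmp (be i) b)" "y \<in> RI (ga j)" by blast
          then obtain c d where cd: "c \<in> L" "s (cmp (be i) b) = r c" "y = cmp (cmp (be i) b) c"
             "d \<in> L" "s (ga j) = r d" "y = cmp (ga j) d" unfolding RI_iff by blast
          have gj: "ga j \<in> L" using L2 j(1) by auto
          have sab: "s (al i) = s (be i)" using sA[OF i(1)] by simp
          have abeq: "cmp e a = cmp (al i) b" using ab(3) ab(6) by simp
          have cdeq: "cmp (cmp (be i) b) c = cmp (ga j) d" using cd(3) cd(6) by simp
          have Gij: "RI (be i) \<inter> RI (ga j) = (\<Union>f\<in>G i j. RI f)" using G1[OF i(1) j(1)] by blast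
          have pfi: "\<forall>f\<in>G i j. P i j f \<in> L \<and> s (be i) = r (P i j f) \<and> f = cmp (be i) (P i j f)"
            using PP i(1) j(1) by blast
          obtain f where f: "f \<in> G i j" "RI e \<inter> RI (cmp (al i) (P i j f)) \<noteq> {}"
            using meet[OF eL(1) bi(3) bi(1) gj sab ab(1) ab(4) ab(2) ab(5) abeq cd(1) cd(4) cd(2) cd(5) cdeq Gij pfi]
            by blast
          have "cmp (al i) (P i j f) \<in> fst ` PK"
          proof -
            have mem: "(cmp (al i) (P i j f), cmp (de j) (Q i j f)) \<in> PK" unfolding PK_def
              by (rule image_eqI[of _ _ "(i,j,f)"]) (simp_all add: inK[OF i(1) j(1) f(1)])
            show ?thesis using mem by (intro image_eqI[of _ fst "(cmp (al i) (P i j f), cmp (de j) (Q i j f))"]) simp_all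
          qed
          then show "\<exists>b\<in>fst ` PK. RI e \<inter> RI b \<noteq> {}" using f(2) by blast
        qed
        have ex2: "\<forall>e\<in>obj_slice L r X. \<exists>b\<in>snd ` PK. RI e \<inter> RI b \<noteq> {}"
        proof
          fix e assume e: "e \<in> obj_slice L r X"
          then have eL: "e \<in> L" "r e = X" unfolding obj_slice_def by auto
          obtain j where j: "j < m" "RI e \<inter> RI (de j) \<noteq> {}" using Z(3) e XZ by blast
          then obtain x where "x \<in> RI e" "x \<in> RI (de j)" by blast
          then obtain a b where ab: "a \<in> L" "s e = r a" "x = cmp e a" "b \<in> L" "s (de j) = r b" "x = cmp (de j) b"
            unfolding RI_iff by blast
          have gj: "ga j \<in> L" "r (ga j) = X" "de j \<in> L" using Y'(2) XY' j(1) L2 unfolding obj_slice_def by auto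
          have sgb: "s (ga j) = r b" using sB[OF j(1)] ab(5) by simp
          have "cmp (ga j) b \<in> obj_slice L r Y" unfolding obj_slice_def
            using cmpL[OF gj(1) ab(4) sgb] r_cmp[OF gj(1) ab(4) sgb] gj(2) XY by simp
          then obtain i where i: "i < n" "RI (cmp (ga j) b) \<inter> RI (be i) \<noteq> {}" using Y(3) by blast
          then obtain y where "y \<in> RI (cmp (ga j) b)" "y \<in> RI (be i)" by blast
          then obtain c d where cd: "c \<in> L" "s (cmp (ga j) b) = r c" "y = cmp (cmp (ga j) b) c"
             "d \<in> L" "s (be i) = r d" "y = cmp (be i) d" unfolding RI_iff by blast
          have bi: "be i \<in> L" using L1 i(1) by auto
          have Gc: "RI (ga j) \<inter> RI (be i) = (\<Union>f\<in>G i j. RI f)" using G1[OF i(1) j(1)] by blast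
          have sab: "s (de j) = s (ga j)" using sB[OF j(1)] by simp
          have abeq: "cmp e a = cmp (de j) b" using ab(3) ab(6) by simp
          have cdeq: "cmp (cmp (ga j) b) c = cmp (be i) d" using cd(3) cd(6) by simp
          have pfi: "\<forall>f\<in>G i j. Q i j f \<in> L \<and> s (ga j) = r (Q i j f) \<and> f = cmp (ga j) (Q i j f)"
            using QQ i(1) j(1) by blast
          obtain f where f: "f \<in> G i j" "RI e \<inter> RI (cmp (de j) (Q i j f)) \<noteq> {}"
            using meet[OF eL(1) gj(3) gj(1) bi sab ab(1) ab(4) ab(2) ab(5) abeq cd(1) cd(4) cd(2) cd(5) cdeq Gc pfi]
            by blast
          have "cmp (de j) (Q i j f) \<in> snd ` PK"
          proof -
            have mem: "(cmp (al i) (P i j f), cmp (de j) (Q i j f)) \<in> PK" unfolding PK_def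
              by (rule image_eqI[of _ _ "(i,j,f)"]) (simp_all add: inK[OF i(1) j(1) f(1)])
            show ?thesis using mem by (intro image_eqI[of _ snd "(cmp (al i) (P i j f), cmp (de j) (Q i j f))"]) simp_all
          qed
          then show "\<exists>b\<in>snd ` PK. RI e \<inter> RI b \<noteq> {}" using f(2) by blast
        qed
        have "exhaustive L Obj r s cmp (fst ` PK)" using exh_I[OF X(1) fstPK ex1] .
        moreover have "exhaustive L Obj r s cmp (snd ` PK)" using exh_I[OF X(1)] sndPK ex2 XZ by simp
        ultimately show ?thesis by (rule mkF[OF finPK PKne PKL weq wI])
      qed
    qed
  qed
qed

end

theorem lemma4p8:
  fixes L Obj :: "'a set" and r s :: "'a \<Rightarrow> 'a" and cmp :: "'a \<Rightarrow> 'a \<Rightarrow> 'a"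
  assumes "small_category L Obj r s cmp"
    and "left_cancellative L r s cmp"
    and "finitely_aligned L r s cmp"
  shows "inverse_subsemigroup (F_Lambda L Obj r s cmp) (S_Iso L r s cmp)"
proof -
  interpret lcat L Obj r s cmp using assms by unfold_locales
  show ?thesis unfolding inverse_subsemigroup_def
    using F_sub F_mult F_conv by blast
qed

end
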